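(* Let $f:\{0,1\}^n\to\{0,1\}$, let $\mathcal D$ be a distribution on $\{0,1\}^n$, and let $a\in\mathbb C^{2^n}$ be a unit vector with $\mathcal D(x)=|a_x|^2$ for all $x$. Let $\Gamma\in\mathbb R^{2^n\times 2^n}$ be a nonzero adversary matrix for $f$ having $a$ as a principal eigenvector. Consider a memoryless quantum query algorithm accessing $x\sim\mathcal D$, with joint state after $t$ queries $|\psi^t\rangle=\sum_{x}a_x|\psi_x^t\rangle\otimes|x\rangle$, and define $\Delta_t=\|\Gamma\|-|\langle\psi^t|(I\otimes\Gamma)|\psi^t\rangle|$. Then: (i) $\Delta_0=0$; (ii) $\Delta_{t+1}\le\Delta_t+2\max_{i\in\{1,\dots,n\}}\|\Gamma_i\|$ for each $t$; (iii) the average success probability after $T$ queries satisfies $p_{\mathrm{succ}}^{\mathcal D}\le\frac12+\sqrt{\Delta_T/(2\|\Gamma\|)}$. Consequently, $Q_{\mathcal D}(f)\ge\frac{\|\Gamma\|}{36\max_{i}\|\Gamma_i\|}$.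
   Context: Query model: the algorithm space has basis $|i,b\rangle$, $i\in\{1,\dots,n\}$, $b\in\{0,1\}$; $O_x|i,b\rangle=|i,b\oplus x_i\rangle$; a memoryless $T$-query algorithm is a sequence of unitaries $U_0,\dots,U_T$, with $|\psi_x^t\rangle=U_tO_x\cdots U_1O_xU_0|\mathrm{init}\rangle$ for a fixed basis state $|\mathrm{init}\rangle$; its output is the measured value register of the final state. The average success probability is $p_{\mathrm{succ}}^{\mathcal D}=\sum_x\mathcal D(x)\|(I\otimes|f(x)\rangle\langle f(x)|)|\psi_x^T\rangle\|^2$, and $Q_{\mathcal D}(f)$ is the smallest $T$ such that some $T$-query algorithm has $p_{\mathrm{succ}}^{\mathcal D}\ge 2/3$. An adversary matrix for $f$ is a real symmetric $\Gamma\in\mathbb R^{2^n\times2^n}$ (rows/columns indexed by $\{0,1\}^n$) with $\Gamma_{x,y}=0$ whenever $f(x)=f(y)$. For $i\in\{1,\dots,n\}$, $\Gamma_i$ is the matrix with $(\Gamma_i)_{x,y}=\Gamma_{x,y}$ if $x_i\ne y_i$ and $0$ otherwise. $\|\cdot\|$ on matrices is the spectral norm; a principal eigenvector is a unit eigenvector whose eigenvalue has absolute value $\|\Gamma\|$. *)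

theory Defs
  imports Complex_Main "HOL-Library.Extended_Nat"
begin

text \<open>Inputs x in {0,1}^n are bool lists of length n; bit i (0-based) is x ! i.\<close>
definition inputs :: "nat \<Rightarrow> bool list set" where
  "inputs n = {xs. length xs = n}"

text \<open>Index set of the algorithm space: basis states |i,b> with i < n (0-based).\<close>
definition alg_idx :: "nat \<Rightarrow> (nat \<times> bool) set" where
  "alg_idx n = {0..<n} \<times> (UNIV :: bool set)"

type_synonym avec = "nat \<times> bool \<Rightarrow> complex"
type_synonym amat = "nat \<times> bool \<Rightarrow> nat \<times> bool \<Rightarrow> complex"

definition mat_app :: "nat \<Rightarrow> amat \<Rightarrow> avec \<Rightarrow> avec" where
  "mat_app n M v = (\<lambda>p. \<Sum>q\<in>alg_idx n. M p q * v q)"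

definition unitary_on :: "nat \<Rightarrow> amat \<Rightarrow> bool" where
  "unitary_on n M \<longleftrightarrow>
     (\<forall>p\<in>alg_idx n. \<forall>q\<in>alg_idx n.
        (\<Sum>r\<in>alg_idx n. cnj (M r p) * M r q) = (if p = q then 1 else 0))"

definition query_oracle :: "bool list \<Rightarrow> avec \<Rightarrow> avec" where
  "query_oracle x v = (\<lambda>(i, b). v (i, b \<noteq> x ! i))"

definition ket :: "nat \<times> bool \<Rightarrow> avec" where
  "ket p0 = (\<lambda>p. if p = p0 then 1 else 0)"

primrec alg_state :: "nat \<Rightarrow> (nat \<Rightarrow> amat) \<Rightarrow> nat \<times> bool \<Rightarrow> bool list \<Rightarrow> nat \<Rightarrow> avec" where
  "alg_state n U init x 0 = mat_app n (U 0) (ket init)"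
| "alg_state n U init x (Suc t) = mat_app n (U (Suc t)) (query_oracle x (alg_state n U init x t))"

text \<open>Memoryless T-query algorithm: unitaries U_0..U_T, fixed basis state init.\<close>
definition valid_alg :: "nat \<Rightarrow> nat \<Rightarrow> (nat \<Rightarrow> amat) \<Rightarrow> nat \<times> bool \<Rightarrow> bool" where
  "valid_alg n T U init \<longleftrightarrow> init \<in> alg_idx n \<and> (\<forall>t\<le>T. unitary_on n (U t))"

text \<open>Average success probability: output = measured value register b.\<close>
definition p_succ :: "nat \<Rightarrow> (bool list \<Rightarrow> bool) \<Rightarrow> (bool list \<Rightarrow> real) \<Rightarrow> nat
    \<Rightarrow> (nat \<Rightarrow> amat) \<Rightarrow> nat \<times> bool \<Rightarrow> real" where
  "p_succ n f D T U init =
     (\<Sum>x\<in>inputs n. D x * (\<Sum>i<n. (cmod (alg_state n U init x T (i, f x)))\<^sup>2))"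

text \<open>Q_D(f): least T such that some T-query algorithm has success >= 2/3
  (infinity if there is none).\<close>
definition query_complexity :: "nat \<Rightarrow> (bool list \<Rightarrow> bool) \<Rightarrow> (bool list \<Rightarrow> real) \<Rightarrow> enat" where
  "query_complexity n f D =
     Inf {enat T | T. \<exists>U init. valid_alg n T U init \<and> p_succ n f D T U init \<ge> 2/3}"

definition spec_norm :: "'a set \<Rightarrow> ('a \<Rightarrow> 'a \<Rightarrow> real) \<Rightarrow> real" where
  "spec_norm S M = Sup {sqrt (\<Sum>x\<in>S. (cmod (\<Sum>y\<in>S. of_real (M x y) * v y))\<^sup>2) | v.
                         (\<Sum>y\<in>S. (cmod (v y))\<^sup>2) = 1}"

definition adversary_matrix :: "nat \<Rightarrow> (bool list \<Rightarrow> bool) \<Rightarrow> (bool list \<Rightarrow> bool list \<Rightarrow> real) \<Rightarrow> bool" where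
  "adversary_matrix n f \<Gamma> \<longleftrightarrow>
     (\<forall>x\<in>inputs n. \<forall>y\<in>inputs n. \<Gamma> x y = \<Gamma> y x \<and> (f x = f y \<longrightarrow> \<Gamma> x y = 0))"

text \<open>Gamma_i (0-based i).\<close>
definition adv_part :: "(bool list \<Rightarrow> bool list \<Rightarrow> real) \<Rightarrow> nat \<Rightarrow> bool list \<Rightarrow> bool list \<Rightarrow> real" where
  "adv_part \<Gamma> i = (\<lambda>x y. if x ! i \<noteq> y ! i then \<Gamma> x y else 0)"

definition principal_eigvec :: "nat \<Rightarrow> (bool list \<Rightarrow> bool list \<Rightarrow> real) \<Rightarrow> (bool list \<Rightarrow> complex) \<Rightarrow> bool" where
  "principal_eigvec n \<Gamma> a \<longleftrightarrow>
     (\<Sum>x\<in>inputs n. (cmod (a x))\<^sup>2) = 1 \<and>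
     (\<exists>ev::complex. cmod ev = spec_norm (inputs n) \<Gamma> \<and>
        (\<forall>x\<in>inputs n. (\<Sum>y\<in>inputs n. of_real (\<Gamma> x y) * a y) = ev * a x))"

definition joint_state :: "nat \<Rightarrow> (nat \<Rightarrow> amat) \<Rightarrow> nat \<times> bool \<Rightarrow> (bool list \<Rightarrow> complex) \<Rightarrow> nat
    \<Rightarrow> (nat \<times> bool) \<times> bool list \<Rightarrow> complex" where
  "joint_state n U init a t = (\<lambda>(p, x). a x * alg_state n U init x t p)"

definition id_tensor :: "nat \<Rightarrow> (bool list \<Rightarrow> bool list \<Rightarrow> real)
    \<Rightarrow> ((nat \<times> bool) \<times> bool list \<Rightarrow> complex) \<Rightarrow> (nat \<times> bool) \<times> bool list \<Rightarrow> complex" where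
  "id_tensor n \<Gamma> \<phi> = (\<lambda>(p, x). \<Sum>y\<in>inputs n. of_real (\<Gamma> x y) * \<phi> (p, y))"

definition joint_inner :: "nat \<Rightarrow> ((nat \<times> bool) \<times> bool list \<Rightarrow> complex)
    \<Rightarrow> ((nat \<times> bool) \<times> bool list \<Rightarrow> complex) \<Rightarrow> complex" where
  "joint_inner n \<phi> \<chi> = (\<Sum>z\<in>alg_idx n \<times> inputs n. cnj (\<phi> z) * \<chi> z)"

definition Delta :: "nat \<Rightarrow> (bool list \<Rightarrow> bool list \<Rightarrow> real) \<Rightarrow> (nat \<Rightarrow> amat) \<Rightarrow> nat \<times> bool
    \<Rightarrow> (bool list \<Rightarrow> complex) \<Rightarrow> nat \<Rightarrow> real" where
  "Delta n \<Gamma> U init a t =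
     spec_norm (inputs n) \<Gamma>
     - cmod (joint_inner n (joint_state n U init a t) (id_tensor n \<Gamma> (joint_state n U init a t)))"

end

theory Submission
  imports Defs "HOL-Analysis.Convex"
begin


definition nrm2 :: "'a set \<Rightarrow> ('a \<Rightarrow> complex) \<Rightarrow> real" where
  "nrm2 A v = (\<Sum>x\<in>A. (cmod (v x))\<^sup>2)"
definition cinner :: "'a set \<Rightarrow> ('a \<Rightarrow> complex) \<Rightarrow> ('a \<Rightarrow> complex) \<Rightarrow> complex" where
  "cinner A u v = (\<Sum>x\<in>A. cnj (u x) * v x)"
definition bil :: "'a set \<Rightarrow> ('a \<Rightarrow> 'a \<Rightarrow> real) \<Rightarrow> ('a \<Rightarrow> complex) \<Rightarrow> ('a \<Rightarrow> complex) \<Rightarrow> complex" where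
  "bil A M u v = (\<Sum>x\<in>A. \<Sum>y\<in>A. cnj (u x) * of_real (M x y) * v y)"

lemma nrm2_nonneg: "0 \<le> nrm2 A v"
  unfolding nrm2_def by (simp add: sum_nonneg)

lemma cs_real:
  fixes a b :: "'a \<Rightarrow> real"
  shows "(\<Sum>i\<in>I. a i * b i) \<le> sqrt (\<Sum>i\<in>I. (a i)\<^sup>2) * sqrt (\<Sum>i\<in>I. (b i)\<^sup>2)"
proof -
  have "(\<Sum>i\<in>I. a i * b i) \<le> sqrt ((\<Sum>i\<in>I. a i * b i)\<^sup>2)" by simp
  also have "\<dots> \<le> sqrt ((\<Sum>i\<in>I. (a i)\<^sup>2) * (\<Sum>i\<in>I. (b i)\<^sup>2))"
    by (rule real_sqrt_le_mono[OF Cauchy_Schwarz_ineq_sum])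
  finally show ?thesis by (simp add: real_sqrt_mult)
qed

lemma cs_complex: "cmod (cinner A u v) \<le> sqrt (nrm2 A u) * sqrt (nrm2 A v)"
proof -
  have "cmod (cinner A u v) \<le> (\<Sum>x\<in>A. cmod (u x) * cmod (v x))"
    unfolding cinner_def by (rule order_trans[OF norm_sum]) (simp add: norm_mult)
  also have "\<dots> \<le> sqrt (nrm2 A u) * sqrt (nrm2 A v)"
    unfolding nrm2_def by (rule cs_real)
  finally show ?thesis .
qed

abbreviation "specset X M \<equiv> {sqrt (\<Sum>x\<in>X. (cmod (\<Sum>y\<in>X. of_real (M x y) * v y))\<^sup>2) | v.
                         (\<Sum>y\<in>X. (cmod (v y))\<^sup>2) = 1}"

lemma spec_bdd:
  assumes "finite X"
  shows "bdd_above (specset X M)"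
proof -
  have "sqrt (\<Sum>x\<in>X. (cmod (\<Sum>y\<in>X. of_real (M x y) * v y))\<^sup>2) \<le> sqrt (\<Sum>x\<in>X. (\<Sum>y\<in>X. \<bar>M x y\<bar>)\<^sup>2)"
    if v: "(\<Sum>y\<in>X. (cmod (v y))\<^sup>2) = 1" for v
  proof -
    have vb: "cmod (v y) \<le> 1" if "y \<in> X" for y
    proof -
      have "(cmod (v y))\<^sup>2 \<le> (\<Sum>y\<in>X. (cmod (v y))\<^sup>2)"
        using assms that by (intro member_le_sum) auto
      then have "(cmod (v y))\<^sup>2 \<le> 1\<^sup>2" using v by simp
      then show ?thesis by (rule power2_le_imp_le) simp
    qed
    have "cmod (\<Sum>y\<in>X. of_real (M x y) * v y) \<le> (\<Sum>y\<in>X. \<bar>M x y\<bar>)" for x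
    proof -
      have "cmod (\<Sum>y\<in>X. of_real (M x y) * v y) \<le> (\<Sum>y\<in>X. cmod (of_real (M x y) * v y))"
        by (rule norm_sum)
      also have "\<dots> \<le> (\<Sum>y\<in>X. \<bar>M x y\<bar>)"
        proof (intro sum_mono)
        fix y assume "y \<in> X"
        then have "\<bar>M x y\<bar> * cmod (v y) \<le> \<bar>M x y\<bar> * 1" by (intro mult_left_mono vb) auto
        then show "cmod (of_real (M x y) * v y) \<le> \<bar>M x y\<bar>" by (simp add: norm_mult)
      qed
      finally show ?thesis .
    qed
    then show ?thesis
      by (intro real_sqrt_le_mono sum_mono power_mono) auto
  qed
  then show ?thesis unfolding bdd_above_def by blast
qed

lemma spec_upper:
  assumes "finite X" "nrm2 X v = 1"
  shows "sqrt (\<Sum>x\<in>X. (cmod (\<Sum>y\<in>X. of_real (M x y) * v y))\<^sup>2) \<le> spec_norm X M"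
  unfolding spec_norm_def
  by (rule cSup_upper) (use assms spec_bdd[OF assms(1)] in \<open>auto simp: nrm2_def\<close>)

lemma spec_nonneg:
  assumes "finite X" "x0 \<in> X"
  shows "0 \<le> spec_norm X M"
proof -
  define v :: "'a \<Rightarrow> complex" where "v = (\<lambda>y. if y = x0 then 1 else 0)"
  have "nrm2 X v = 1" unfolding nrm2_def v_def using assms
    by (simp add: if_distrib[of "\<lambda>z. (cmod z)^2"] sum.delta cong: if_cong)
  from spec_upper[OF assms(1) this] show ?thesis by (meson order_trans real_sqrt_ge_zero sum_nonneg zero_le_power2)
qed

definition matv :: "'a set \<Rightarrow> ('a \<Rightarrow> 'a \<Rightarrow> real) \<Rightarrow> ('a \<Rightarrow> complex) \<Rightarrow> 'a \<Rightarrow> complex" where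
  "matv X M v = (\<lambda>x. \<Sum>y\<in>X. of_real (M x y) * v y)"

lemma spec_bound:
  assumes "finite X" "x0 \<in> X"
  shows "sqrt (nrm2 X (matv X M v)) \<le> spec_norm X M * sqrt (nrm2 X v)"
proof (cases "nrm2 X v = 0")
  case True
  then have "\<forall>y\<in>X. (cmod (v y))\<^sup>2 = 0" unfolding nrm2_def
    by (subst (asm) sum_nonneg_eq_0_iff[OF assms(1)]) auto
  then have "\<forall>y\<in>X. v y = 0" by simp
  then have "nrm2 X (matv X M v) = 0" by (simp add: nrm2_def matv_def)
  then show ?thesis using True by simp
next
  case False
  define c where "c = sqrt (nrm2 X v)"
  have c: "c > 0" using False nrm2_nonneg[of X v] unfolding c_def by simp
  define w where "w = (\<lambda>y. v y / of_real c)"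
  have "nrm2 X w = nrm2 X v / c\<^sup>2"
    by (simp add: w_def nrm2_def norm_divide power_divide sum_divide_distrib)
  also have "\<dots> = 1" using c c_def False nrm2_nonneg[of X v] by simp
  finally have w1: "nrm2 X w = 1" .
  have mw: "matv X M w = (\<lambda>x. matv X M v x / of_real c)"
    by (simp add: w_def matv_def sum_divide_distrib)
  have "nrm2 X (matv X M w) = nrm2 X (matv X M v) / c\<^sup>2"
    by (simp add: mw nrm2_def norm_divide power_divide sum_divide_distrib)
  then have e: "sqrt (nrm2 X (matv X M w)) = sqrt (nrm2 X (matv X M v)) / c"
    using c by (simp add: real_sqrt_divide)
  have "sqrt (nrm2 X (matv X M w)) \<le> spec_norm X M"
    using spec_upper[OF assms(1) w1, of M] by (simp add: nrm2_def matv_def)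
  then show ?thesis using c e unfolding c_def[symmetric] by (simp add: divide_le_eq mult.commute)
qed

lemma bil_eq: "bil X M u v = cinner X u (matv X M v)"
  by (simp add: bil_def cinner_def matv_def sum_distrib_left mult.assoc)

lemma bil_bound:
  assumes "finite X" "x0 \<in> X"
  shows "cmod (bil X M u v) \<le> spec_norm X M * sqrt (nrm2 X u) * sqrt (nrm2 X v)"
proof -
  have "cmod (bil X M u v) \<le> sqrt (nrm2 X u) * sqrt (nrm2 X (matv X M v))"
    unfolding bil_eq by (rule cs_complex)
  also have "\<dots> \<le> sqrt (nrm2 X u) * (spec_norm X M * sqrt (nrm2 X v))"
    by (intro mult_left_mono spec_bound[OF assms]) (simp add: nrm2_nonneg)
  finally show ?thesis by (simp add: mult_ac)
qed

lemma bil_diff: "bil X M u (\<lambda>y. v y - w y) = bil X M u v - bil X M u w"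
  by (simp add: bil_def algebra_simps sum_subtractf)


lemma final_alg:
  fixes al be ga de s g p :: real
  assumes nn: "0 \<le> al" "0 \<le> be" "0 \<le> ga" "0 \<le> de" and s: "s > 0"
    and g: "g \<le> 2 * s * (al * be + ga * de)"
    and n0: "al\<^sup>2 + ga\<^sup>2 = 1/2" and n1: "be\<^sup>2 + de\<^sup>2 = 1/2"
    and p: "p = al\<^sup>2 + de\<^sup>2"
  shows "p \<le> 1/2 + sqrt ((s - g) / (2 * s))"
proof (cases "p \<le> 1/2")
  case True
  have "0 \<le> sqrt ((s - g) / (2 * s))" if "g \<le> s" using that s by simp
  show ?thesis
  proof (cases "g \<le> s")
    case True
    then have "0 \<le> (s - g) / (2 * s)" using s by simp
    then have "0 \<le> sqrt ((s - g) / (2 * s))" by simp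
    then show ?thesis using \<open>p \<le> 1/2\<close> by linarith
  next
    case False
    define w where "w = al * be + ga * de"
    have "w\<^sup>2 + (al * de - ga * be)\<^sup>2 = (al\<^sup>2 + ga\<^sup>2) * (be\<^sup>2 + de\<^sup>2)"
      unfolding w_def by (simp add: power2_eq_square algebra_simps)
    then have "w\<^sup>2 + (al * de - ga * be)\<^sup>2 = 1/4" using n0 n1 by simp
    then have "w\<^sup>2 \<le> 1/4" using zero_le_power2[of "al * de - ga * be"] by linarith
    then have "w \<le> 1/2" using power2_le_imp_le[of w "1/2"] by (simp add: power2_eq_square)
    then have "2 * s * w \<le> 2 * s * (1/2)" using s by (intro mult_left_mono) auto
    then have "g \<le> s" using g unfolding w_def by simp
    then show ?thesis using False by simp
  qed
next
  case False
  define w where "w = al * be + ga * de"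
  have w0: "0 \<le> w" unfolding w_def using nn by simp
  have lag: "w\<^sup>2 + (al * de - ga * be)\<^sup>2 = 1/4"
  proof -
    have "w\<^sup>2 + (al * de - ga * be)\<^sup>2 = (al\<^sup>2 + ga\<^sup>2) * (be\<^sup>2 + de\<^sup>2)"
      unfolding w_def by (simp add: power2_eq_square algebra_simps)
    then show ?thesis using n0 n1 by simp
  qed
  have pd: "p - 1/2 = al\<^sup>2 - be\<^sup>2" using p n1 by simp
  have pd2: "p - 1/2 = de\<^sup>2 - ga\<^sup>2" using p n0 by simp
  have "(al * de - ga * be)\<^sup>2 - (p - 1/2)\<^sup>2 = (al * ga - be * de)\<^sup>2"
  proof -
    have "(p - 1/2)\<^sup>2 = (al\<^sup>2 - be\<^sup>2) * (de\<^sup>2 - ga\<^sup>2)" using pd pd2 by (simp add: power2_eq_square)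
    then show ?thesis by (simp add: power2_eq_square algebra_simps)
  qed
  then have key: "(p - 1/2)\<^sup>2 \<le> 1/4 - w\<^sup>2" using lag by (smt (verit) zero_le_power2)
  have pos: "0 < (p - 1/2)\<^sup>2" using False by simp
  have "1/4 - w\<^sup>2 = (1/2 - w) * (1/2 + w)" by (simp add: power2_eq_square algebra_simps)
  have wl: "w < 1/2"
  proof (rule ccontr)
    assume "\<not> w < 1/2"
    then have "(1/2)\<^sup>2 \<le> w\<^sup>2" by (intro power_mono) auto
    then show False using key pos by (simp add: power2_eq_square)
  qed
  have "(1/2 - w) * (1/2 + w) \<le> 1/2 - w" 
    using mult_left_mono[of "1/2 + w" 1 "1/2 - w"] wl w0 by simp
  with key \<open>1/4 - w\<^sup>2 = _\<close> have k2: "(p - 1/2)\<^sup>2 \<le> 1/2 - w" by simp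
  have "1/2 - w \<le> (s - g) / (2 * s)"
  proof -
    have "(s - g) / (2 * s) \<ge> (s - 2 * s * w) / (2 * s)"
      using g s unfolding w_def by (intro divide_right_mono) auto
    also have "(s - 2 * s * w) / (2 * s) = 1/2 - w" using s by (simp add: field_simps)
    finally show ?thesis .
  qed
  with k2 have "(p - 1/2)\<^sup>2 \<le> (s - g) / (2 * s)" by simp
  then have "p - 1/2 \<le> sqrt ((s - g) / (2 * s))" using False real_le_rsqrt by simp
  then show ?thesis by simp
qed



lemma finite_inputs: "finite (inputs n)"
proof -
  have "inputs n = {xs. set xs \<subseteq> (UNIV::bool set) \<and> length xs = n}" by (auto simp: inputs_def)
  then show ?thesis using finite_lists_length_eq[of "UNIV::bool set" n] by simp
qed

lemma finite_alg: "finite (alg_idx n)"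
  by (simp add: alg_idx_def)

lemma sum_alg: "sum g (alg_idx n) = (\<Sum>i<n. g (i, False) + g (i, True))"
proof -
  have "sum g (alg_idx n) = (\<Sum>i\<in>{0..<n}. \<Sum>b\<in>UNIV. g (i, b))"
    unfolding alg_idx_def by (simp add: sum.cartesian_product)
  also have "\<dots> = (\<Sum>i<n. g (i, False) + g (i, True))"
    by (simp add: UNIV_bool atLeast0LessThan add.commute)
  finally show ?thesis .
qed

lemma cinner_self: "cinner A v v = of_real (nrm2 A v)"
  unfolding cinner_def nrm2_def of_real_sum
  by (rule sum.cong[OF refl]) (metis complex_norm_square mult.commute)

lemma unitary_inner:
  assumes "unitary_on n M"
  shows "cinner (alg_idx n) (mat_app n M v) (mat_app n M w) = cinner (alg_idx n) v w"
proof -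
  let ?S = "alg_idx n"
  have "cinner ?S (mat_app n M v) (mat_app n M w)
      = (\<Sum>p\<in>?S. \<Sum>q\<in>?S. \<Sum>r\<in>?S. cnj (v q) * w r * (cnj (M p q) * M p r))"
    by (simp add: cinner_def mat_app_def cnj_sum sum_distrib_left sum_distrib_right mult_ac)
  also have "\<dots> = (\<Sum>q\<in>?S. \<Sum>p\<in>?S. \<Sum>r\<in>?S. cnj (v q) * w r * (cnj (M p q) * M p r))"
    by (rule sum.swap)
  also have "\<dots> = (\<Sum>q\<in>?S. \<Sum>r\<in>?S. \<Sum>p\<in>?S. cnj (v q) * w r * (cnj (M p q) * M p r))"
    by (rule sum.cong[OF refl], rule sum.swap)
  also have "\<dots> = (\<Sum>q\<in>?S. \<Sum>r\<in>?S. cnj (v q) * w r * (if q = r then 1 else 0))"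
    using assms unfolding unitary_on_def by (simp add: sum_distrib_left[symmetric])
  also have "\<dots> = cinner ?S v w"
    by (simp add: cinner_def if_distrib[of "\<lambda>z. _ * z"] sum.delta finite_alg cong: if_cong)
  finally show ?thesis .
qed

lemma oracle_inner:
  "cinner (alg_idx n) (query_oracle x v) (query_oracle x w) = cinner (alg_idx n) v w"
  unfolding cinner_def sum_alg query_oracle_def
  apply (rule sum.cong[OF refl])
  subgoal for i by (cases "x ! i") (simp_all add: add.commute)
  done

lemma norm_state:
  assumes "valid_alg n T U init" "t \<le> T"
  shows "nrm2 (alg_idx n) (alg_state n U init x t) = 1"
proof -
  have "cinner (alg_idx n) (alg_state n U init x t) (alg_state n U init x t) = 1"
    using assms(2)
  proof (induction t)
    case 0
    have u: "unitary_on n (U 0)" and i: "init \<in> alg_idx n" using assms(1) by (auto simp: valid_alg_def)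
    have "cinner (alg_idx n) (ket init) (ket init) = 1"
      using i by (simp add: cinner_def ket_def finite_alg if_distrib[of "\<lambda>z. _ * z"] sum.delta cong: if_cong)
    then show ?case using unitary_inner[OF u] by simp
  next
    case (Suc t)
    have u: "unitary_on n (U (Suc t))" using assms(1) Suc.prems by (auto simp: valid_alg_def)
    show ?case using unitary_inner[OF u] oracle_inner Suc by simp
  qed
  then show ?thesis by (simp add: cinner_self)
qed



lemma G_form1:
  "joint_inner n (joint_state n U init a t) (id_tensor n \<Gamma> (joint_state n U init a t))
   = (\<Sum>p\<in>alg_idx n. bil (inputs n) \<Gamma> (\<lambda>x. a x * alg_state n U init x t p) (\<lambda>x. a x * alg_state n U init x t p))"
proof -
  let ?h = "\<lambda>z. cnj (joint_state n U init a t z) * id_tensor n \<Gamma> (joint_state n U init a t) z"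
  have "joint_inner n (joint_state n U init a t) (id_tensor n \<Gamma> (joint_state n U init a t))
     = (\<Sum>p\<in>alg_idx n. \<Sum>x\<in>inputs n. ?h (p, x))"
    unfolding joint_inner_def by (simp add: sum.cartesian_product)
  also have "\<dots> = (\<Sum>p\<in>alg_idx n. bil (inputs n) \<Gamma> (\<lambda>x. a x * alg_state n U init x t p) (\<lambda>x. a x * alg_state n U init x t p))"
    unfolding bil_def joint_state_def id_tensor_def
    by (simp add: sum_distrib_left mult.assoc)
  finally show ?thesis .
qed

lemma forms:
  "(\<Sum>p\<in>alg_idx n. bil X \<Gamma> (\<lambda>x. a x * \<phi> x p) (\<lambda>y. a y * \<phi> y p))
   = (\<Sum>x\<in>X. \<Sum>y\<in>X. cnj (a x) * of_real (\<Gamma> x y) * a y * cinner (alg_idx n) (\<phi> x) (\<phi> y))"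
proof -
  let ?S = "alg_idx n"
  have "(\<Sum>p\<in>?S. bil X \<Gamma> (\<lambda>x. a x * \<phi> x p) (\<lambda>y. a y * \<phi> y p))
     = (\<Sum>p\<in>?S. \<Sum>x\<in>X. \<Sum>y\<in>X. cnj (a x) * of_real (\<Gamma> x y) * a y * (cnj (\<phi> x p) * \<phi> y p))"
    unfolding bil_def by (simp add: mult_ac)
  also have "\<dots> = (\<Sum>x\<in>X. \<Sum>p\<in>?S. \<Sum>y\<in>X. cnj (a x) * of_real (\<Gamma> x y) * a y * (cnj (\<phi> x p) * \<phi> y p))"
    by (rule sum.swap)
  also have "\<dots> = (\<Sum>x\<in>X. \<Sum>y\<in>X. \<Sum>p\<in>?S. cnj (a x) * of_real (\<Gamma> x y) * a y * (cnj (\<phi> x p) * \<phi> y p))"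
    by (rule sum.cong[OF refl], rule sum.swap)
  also have "\<dots> = (\<Sum>x\<in>X. \<Sum>y\<in>X. cnj (a x) * of_real (\<Gamma> x y) * a y * cinner ?S (\<phi> x) (\<phi> y))"
    by (simp add: cinner_def sum_distrib_left)
  finally show ?thesis .
qed

lemma bil_scale: "bil X M (\<lambda>x. a x * c) (\<lambda>y. a y * c) = cnj c * c * bil X M a a"
  by (simp add: bil_def sum_distrib_left mult_ac)

lemma bil_eig:
  assumes "\<forall>x\<in>X. (\<Sum>y\<in>X. of_real (M x y) * a y) = ev * a x"
  shows "bil X M a a = ev * of_real (nrm2 X a)"
proof -
  have "bil X M a a = cinner X a (\<lambda>x. ev * a x)"
    unfolding bil_eq cinner_def matv_def using assms by simp
  also have "\<dots> = ev * cinner X a a" by (simp add: cinner_def sum_distrib_left mult_ac)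
  finally show ?thesis by (simp add: cinner_self)
qed

lemma G0:
  assumes "valid_alg n T U init" and "\<forall>x\<in>inputs n. (\<Sum>y\<in>inputs n. of_real (\<Gamma> x y) * a y) = ev * a x"
    and "nrm2 (inputs n) a = 1"
  shows "joint_inner n (joint_state n U init a 0) (id_tensor n \<Gamma> (joint_state n U init a 0)) = ev"
proof -
  define \<phi> where "\<phi> = mat_app n (U 0) (ket init)"
  have st: "alg_state n U init x 0 = \<phi>" for x by (simp add: \<phi>_def)
  have n1: "nrm2 (alg_idx n) \<phi> = 1" using norm_state[OF assms(1), of 0] st by simp
  have "joint_inner n (joint_state n U init a 0) (id_tensor n \<Gamma> (joint_state n U init a 0))
      = (\<Sum>p\<in>alg_idx n. cnj (\<phi> p) * \<phi> p * bil (inputs n) \<Gamma> a a)"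
    unfolding G_form1 st bil_scale ..
  also have "\<dots> = cinner (alg_idx n) \<phi> \<phi> * bil (inputs n) \<Gamma> a a"
    by (simp add: cinner_def sum_distrib_right)
  also have "\<dots> = ev" using n1 bil_eig[OF assms(2)] assms(3) by (simp add: cinner_self)
  finally show ?thesis .
qed

lemma step_point:
  fixes x y :: "bool list" and v :: "bool list \<Rightarrow> nat \<times> bool \<Rightarrow> complex"
  shows "cnj (a x * v x (i, False \<noteq> x!i)) * of_real (\<Gamma> x y) * (a y * v y (i, False \<noteq> y!i))
       + cnj (a x * v x (i, True \<noteq> x!i)) * of_real (\<Gamma> x y) * (a y * v y (i, True \<noteq> y!i))
       - cnj (a x * v x (i, False)) * of_real (\<Gamma> x y) * (a y * v y (i, False))
       - cnj (a x * v x (i, True)) * of_real (\<Gamma> x y) * (a y * v y (i, True))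
     = cnj (a x * v x (i, False)) * of_real (adv_part \<Gamma> i x y) * (a y * v y (i, True) - a y * v y (i, False))
       + cnj (a x * v x (i, True)) * of_real (adv_part \<Gamma> i x y) * (a y * v y (i, False) - a y * v y (i, True))"
  by (cases "x ! i"; cases "y ! i") (simp_all add: adv_part_def algebra_simps)

lemma step_i:
  fixes v :: "bool list \<Rightarrow> nat \<times> bool \<Rightarrow> complex"
  shows "bil X \<Gamma> (\<lambda>x. a x * v x (i, False \<noteq> x!i)) (\<lambda>y. a y * v y (i, False \<noteq> y!i))
       + bil X \<Gamma> (\<lambda>x. a x * v x (i, True \<noteq> x!i)) (\<lambda>y. a y * v y (i, True \<noteq> y!i))
       - bil X \<Gamma> (\<lambda>x. a x * v x (i, False)) (\<lambda>y. a y * v y (i, False))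
       - bil X \<Gamma> (\<lambda>x. a x * v x (i, True)) (\<lambda>y. a y * v y (i, True))
     = bil X (adv_part \<Gamma> i) (\<lambda>x. a x * v x (i, False)) (\<lambda>y. a y * v y (i, True) - a y * v y (i, False))
       + bil X (adv_part \<Gamma> i) (\<lambda>x. a x * v x (i, True)) (\<lambda>y. a y * v y (i, False) - a y * v y (i, True))"
  unfolding bil_def
  by (simp only: sum.distrib[symmetric] sum_subtractf[symmetric] step_point)



abbreviation "GG n \<Gamma> U init a t \<equiv> joint_inner n (joint_state n U init a t) (id_tensor n \<Gamma> (joint_state n U init a t))"

lemma G_succ:
  assumes "valid_alg n T U init" "Suc t \<le> T"
  shows "GG n \<Gamma> U init a (Suc t) = (\<Sum>i<n.
      bil (inputs n) \<Gamma> (\<lambda>x. a x * alg_state n U init x t (i, False \<noteq> x!i)) (\<lambda>y. a y * alg_state n U init y t (i, False \<noteq> y!i))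
    + bil (inputs n) \<Gamma> (\<lambda>x. a x * alg_state n U init x t (i, True \<noteq> x!i)) (\<lambda>y. a y * alg_state n U init y t (i, True \<noteq> y!i)))"
proof -
  have u: "unitary_on n (U (Suc t))" using assms by (auto simp: valid_alg_def)
  define \<phi> where "\<phi> = (\<lambda>x. query_oracle x (alg_state n U init x t))"
  have "GG n \<Gamma> U init a (Suc t) = (\<Sum>x\<in>inputs n. \<Sum>y\<in>inputs n. cnj (a x) * of_real (\<Gamma> x y) * a y
        * cinner (alg_idx n) (alg_state n U init x (Suc t)) (alg_state n U init y (Suc t)))"
    unfolding G_form1 forms ..
  also have "\<dots> = (\<Sum>x\<in>inputs n. \<Sum>y\<in>inputs n. cnj (a x) * of_real (\<Gamma> x y) * a y
        * cinner (alg_idx n) (\<phi> x) (\<phi> y))"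
    by (simp add: unitary_inner[OF u] \<phi>_def)
  also have "\<dots> = (\<Sum>p\<in>alg_idx n. bil (inputs n) \<Gamma> (\<lambda>x. a x * \<phi> x p) (\<lambda>y. a y * \<phi> y p))"
    unfolding forms ..
  finally show ?thesis by (simp add: sum_alg \<phi>_def query_oracle_def)
qed

lemma G_diff:
  assumes "valid_alg n T U init" "Suc t \<le> T"
  shows "GG n \<Gamma> U init a (Suc t) - GG n \<Gamma> U init a t = (\<Sum>i<n.
      bil (inputs n) (adv_part \<Gamma> i) (\<lambda>x. a x * alg_state n U init x t (i, False))
        (\<lambda>y. a y * alg_state n U init y t (i, True) - a y * alg_state n U init y t (i, False))
    + bil (inputs n) (adv_part \<Gamma> i) (\<lambda>x. a x * alg_state n U init x t (i, True))
        (\<lambda>y. a y * alg_state n U init y t (i, False) - a y * alg_state n U init y t (i, True)))"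
  unfolding G_succ[OF assms] G_form1[of n U init a t] sum_alg sum_subtractf[symmetric]
  apply (rule sum.cong[OF refl])
  subgoal for i using step_i[of "inputs n" \<Gamma> a "\<lambda>x. alg_state n U init x t" i] by (simp add: diff_diff_eq)
  done

lemma per_i_bound:
  assumes "finite X" "x0 \<in> X"
  shows "cmod (bil X N u (\<lambda>y. w y - u y) + bil X N w (\<lambda>y. u y - w y))
         \<le> 2 * spec_norm X N * (nrm2 X u + nrm2 X w)"
proof -
  let ?s = "spec_norm X N"
  define ru where "ru = sqrt (nrm2 X u)"
  define rw where "rw = sqrt (nrm2 X w)"
  have ru: "ru\<^sup>2 = nrm2 X u" "ru \<ge> 0" unfolding ru_def by (simp_all add: nrm2_nonneg)
  have rw: "rw\<^sup>2 = nrm2 X w" "rw \<ge> 0" unfolding rw_def by (simp_all add: nrm2_nonneg)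
  have s0: "?s \<ge> 0" using spec_nonneg[OF assms] .
  have b: "cmod (bil X N p q) \<le> ?s * sqrt (nrm2 X p) * sqrt (nrm2 X q)" for p q
    using bil_bound[OF assms] .
  have "cmod (bil X N u (\<lambda>y. w y - u y) + bil X N w (\<lambda>y. u y - w y))
      = cmod ((bil X N u w - bil X N u u) + (bil X N w u - bil X N w w))"
    by (simp add: bil_diff)
  also have "\<dots> \<le> cmod (bil X N u w) + cmod (bil X N u u) + (cmod (bil X N w u) + cmod (bil X N w w))"
    by (rule order_trans[OF norm_triangle_ineq add_mono[OF norm_triangle_ineq4 norm_triangle_ineq4]])
  also have "\<dots> \<le> ?s * ru * rw + ?s * ru * ru + (?s * rw * ru + ?s * rw * rw)"
    unfolding ru_def rw_def by (intro add_mono b)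
  also have "\<dots> = ?s * (ru + rw)\<^sup>2" by (simp add: power2_eq_square algebra_simps)
  also have "\<dots> \<le> ?s * (2 * (ru\<^sup>2 + rw\<^sup>2))"
  proof (rule mult_left_mono[OF _ s0])
    have "0 \<le> (ru - rw)\<^sup>2" by simp
    then show "(ru + rw)\<^sup>2 \<le> 2 * (ru\<^sup>2 + rw\<^sup>2)" by (simp add: power2_eq_square algebra_simps)
  qed
  finally show ?thesis using ru rw by (simp add: algebra_simps)
qed

lemma total_mass:
  "(\<Sum>p\<in>S. nrm2 X (\<lambda>x. a x * \<phi> x p)) = (\<Sum>x\<in>X. (cmod (a x))\<^sup>2 * nrm2 S (\<phi> x))"
  unfolding nrm2_def
  by (simp add: norm_mult power_mult_distrib sum_distrib_left) (rule sum.swap)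



lemma inputs_ne: "replicate n False \<in> inputs n"
  by (simp add: inputs_def)

lemma G_step_bound:
  assumes "valid_alg n T U init" "Suc t \<le> T" "nrm2 (inputs n) a = 1" "0 < n"
  shows "cmod (GG n \<Gamma> U init a (Suc t) - GG n \<Gamma> U init a t)
         \<le> 2 * Max ((\<lambda>i. spec_norm (inputs n) (adv_part \<Gamma> i)) ` {0..<n})"
proof -
  let ?X = "inputs n"
  let ?M = "Max ((\<lambda>i. spec_norm (inputs n) (adv_part \<Gamma> i)) ` {0..<n})"
  let ?u = "\<lambda>p x. a x * alg_state n U init x t p"
  have fX: "finite ?X" by (rule finite_inputs)
  have sM: "spec_norm ?X (adv_part \<Gamma> i) \<le> ?M" if "i < n" for i
    using that by (intro Max_ge) auto
  have "cmod (GG n \<Gamma> U init a (Suc t) - GG n \<Gamma> U init a t)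
      \<le> (\<Sum>i<n. 2 * spec_norm ?X (adv_part \<Gamma> i) * (nrm2 ?X (?u (i, False)) + nrm2 ?X (?u (i, True))))"
    unfolding G_diff[OF assms(1,2)]
    by (rule order_trans[OF norm_sum], rule sum_mono, rule per_i_bound[OF fX inputs_ne])
  also have "\<dots> \<le> (\<Sum>i<n. 2 * ?M * (nrm2 ?X (?u (i, False)) + nrm2 ?X (?u (i, True))))"
    by (intro sum_mono mult_right_mono) (auto simp: sM nrm2_nonneg add_nonneg_nonneg)
  also have "\<dots> = 2 * ?M * (\<Sum>p\<in>alg_idx n. nrm2 ?X (?u p))"
    by (simp add: sum_alg sum_distrib_left)
  also have "(\<Sum>p\<in>alg_idx n. nrm2 ?X (?u p)) = (\<Sum>x\<in>?X. (cmod (a x))\<^sup>2 * nrm2 (alg_idx n) (alg_state n U init x t))"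
    by (rule total_mass)
  also have "\<dots> = nrm2 ?X a"
    using norm_state[OF assms(1), of t] assms(2) by (simp add: nrm2_def)
  finally show ?thesis using assms(3) by simp
qed

lemma Delta_step:
  assumes "valid_alg n T U init" "Suc t \<le> T" "nrm2 (inputs n) a = 1" "0 < n"
  shows "Delta n \<Gamma> U init a (Suc t) \<le> Delta n \<Gamma> U init a t
         + 2 * Max ((\<lambda>i. spec_norm (inputs n) (adv_part \<Gamma> i)) ` {0..<n})"
proof -
  have "cmod (GG n \<Gamma> U init a t) - cmod (GG n \<Gamma> U init a (Suc t))
        \<le> cmod (GG n \<Gamma> U init a t - GG n \<Gamma> U init a (Suc t))"
    by (rule norm_triangle_ineq2)
  also have "\<dots> = cmod (GG n \<Gamma> U init a (Suc t) - GG n \<Gamma> U init a t)"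
    by (rule norm_minus_commute)
  finally show ?thesis using G_step_bound[OF assms, of \<Gamma>] unfolding Delta_def by linarith
qed

lemma spec_pos:
  assumes "x \<in> inputs n" "y \<in> inputs n" "\<Gamma> x y \<noteq> 0"
  shows "0 < spec_norm (inputs n) \<Gamma>"
proof -
  let ?X = "inputs n"
  define v :: "bool list \<Rightarrow> complex" where "v = (\<lambda>z. if z = y then 1 else 0)"
  have v1: "nrm2 ?X v = 1" unfolding nrm2_def v_def using assms finite_inputs
    by (simp add: if_distrib[of "\<lambda>z. (cmod z)^2"] sum.delta cong: if_cong)
  have mv: "matv ?X \<Gamma> v x = of_real (\<Gamma> x y)"
    unfolding matv_def v_def using assms finite_inputs
    by (simp add: if_distrib[of "\<lambda>z. _ * z"] sum.delta cong: if_cong)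
  have "(cmod (matv ?X \<Gamma> v x))\<^sup>2 \<le> nrm2 ?X (matv ?X \<Gamma> v)"
    unfolding nrm2_def using assms finite_inputs by (intro member_le_sum) auto
  moreover have "0 < (cmod (matv ?X \<Gamma> v x))\<^sup>2" using mv assms by simp
  ultimately have "0 < nrm2 ?X (matv ?X \<Gamma> v)" by linarith
  then have "0 < sqrt (nrm2 ?X (matv ?X \<Gamma> v))" by simp
  also have "\<dots> \<le> spec_norm ?X \<Gamma>"
    using spec_upper[OF finite_inputs v1, of \<Gamma>] by (simp add: nrm2_def matv_def)
  finally show ?thesis .
qed



definition m0 :: "(bool list \<Rightarrow> bool) \<Rightarrow> (bool list \<Rightarrow> complex) \<Rightarrow> bool list \<Rightarrow> complex" where
  "m0 f a = (\<lambda>x. if f x then 0 else a x)"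
definition m1 :: "(bool list \<Rightarrow> bool) \<Rightarrow> (bool list \<Rightarrow> complex) \<Rightarrow> bool list \<Rightarrow> complex" where
  "m1 f a = (\<lambda>x. if f x then a x else 0)"

lemma bil_split:
  assumes adv: "adversary_matrix n f \<Gamma>"
  shows "bil (inputs n) \<Gamma> (\<lambda>x. a x * \<phi> x) (\<lambda>x. a x * \<phi> x)
       = bil (inputs n) \<Gamma> (\<lambda>x. m0 f a x * \<phi> x) (\<lambda>x. m1 f a x * \<phi> x)
       + bil (inputs n) \<Gamma> (\<lambda>x. m1 f a x * \<phi> x) (\<lambda>x. m0 f a x * \<phi> x)"
  unfolding bil_def sum.distrib[symmetric]
proof (intro sum.cong refl)
  fix x y assume xy: "x \<in> inputs n" "y \<in> inputs n"
  show "cnj (a x * \<phi> x) * of_real (\<Gamma> x y) * (a y * \<phi> y) =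
        cnj (m0 f a x * \<phi> x) * of_real (\<Gamma> x y) * (m1 f a y * \<phi> y) +
        cnj (m1 f a x * \<phi> x) * of_real (\<Gamma> x y) * (m0 f a y * \<phi> y)"
  proof (cases "f x = f y")
    case True
    then have "\<Gamma> x y = 0" using adv xy unfolding adversary_matrix_def by blast
    then show ?thesis by simp
  next
    case False
    then show ?thesis by (cases "f x") (auto simp: m0_def m1_def)
  qed
qed

lemma bil_abs_split:
  assumes adv: "adversary_matrix n f \<Gamma>"
  shows "cmod (bil (inputs n) \<Gamma> (\<lambda>x. a x * \<phi> x) (\<lambda>x. a x * \<phi> x))
     \<le> 2 * spec_norm (inputs n) \<Gamma> * (sqrt (nrm2 (inputs n) (\<lambda>x. m0 f a x * \<phi> x))
            * sqrt (nrm2 (inputs n) (\<lambda>x. m1 f a x * \<phi> x)))"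
proof -
  have b: "cmod (bil (inputs n) \<Gamma> p q) \<le> spec_norm (inputs n) \<Gamma> * sqrt (nrm2 (inputs n) p) * sqrt (nrm2 (inputs n) q)" for p q
    using bil_bound[OF finite_inputs inputs_ne] .
  have "cmod (bil (inputs n) \<Gamma> (\<lambda>x. a x * \<phi> x) (\<lambda>x. a x * \<phi> x))
     \<le> spec_norm (inputs n) \<Gamma> * sqrt (nrm2 (inputs n) (\<lambda>x. m0 f a x * \<phi> x)) * sqrt (nrm2 (inputs n) (\<lambda>x. m1 f a x * \<phi> x))
      + spec_norm (inputs n) \<Gamma> * sqrt (nrm2 (inputs n) (\<lambda>x. m1 f a x * \<phi> x)) * sqrt (nrm2 (inputs n) (\<lambda>x. m0 f a x * \<phi> x))"
    unfolding bil_split[OF adv]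
    by (rule order_trans[OF norm_triangle_ineq add_mono[OF b b]])
  then show ?thesis by (simp add: algebra_simps)
qed

lemma m_nrm: "nrm2 X (m0 f a) + nrm2 X (m1 f a) = nrm2 X a"
  unfolding nrm2_def sum.distrib[symmetric] by (rule sum.cong) (auto simp: m0_def m1_def)

lemma half:
  assumes adv: "adversary_matrix n f \<Gamma>"
    and eig: "\<forall>x\<in>inputs n. (\<Sum>y\<in>inputs n. of_real (\<Gamma> x y) * a y) = ev * a x"
    and ev: "cmod ev > 0" and a1: "nrm2 (inputs n) a = 1"
  shows "nrm2 (inputs n) (m0 f a) = 1/2" "nrm2 (inputs n) (m1 f a) = 1/2"
proof -
  let ?X = "inputs n"
  have e0: "bil ?X \<Gamma> (m0 f a) a = ev * of_real (nrm2 ?X (m0 f a))"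
  proof -
    have "bil ?X \<Gamma> (m0 f a) a = cinner ?X (m0 f a) (\<lambda>x. ev * a x)"
      unfolding bil_eq cinner_def matv_def using eig by simp
    also have "\<dots> = ev * cinner ?X (m0 f a) (m0 f a)"
      unfolding cinner_def sum_distrib_left by (rule sum.cong) (auto simp: m0_def)
    finally show ?thesis by (simp add: cinner_self)
  qed
  have e1: "bil ?X \<Gamma> (m1 f a) a = ev * of_real (nrm2 ?X (m1 f a))"
  proof -
    have "bil ?X \<Gamma> (m1 f a) a = cinner ?X (m1 f a) (\<lambda>x. ev * a x)"
      unfolding bil_eq cinner_def matv_def using eig by simp
    also have "\<dots> = ev * cinner ?X (m1 f a) (m1 f a)"
      unfolding cinner_def sum_distrib_left by (rule sum.cong) (auto simp: m1_def)
    finally show ?thesis by (simp add: cinner_self)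
  qed
  have z0: "bil ?X \<Gamma> (m0 f a) a = bil ?X \<Gamma> (m0 f a) (m1 f a)"
    unfolding bil_def
  proof (intro sum.cong refl)
    fix x y assume xy: "x \<in> ?X" "y \<in> ?X"
    show "cnj (m0 f a x) * of_real (\<Gamma> x y) * a y = cnj (m0 f a x) * of_real (\<Gamma> x y) * m1 f a y"
      using adv xy unfolding adversary_matrix_def m0_def m1_def by (cases "f x"; cases "f y") auto
  qed
  have z1: "bil ?X \<Gamma> (m1 f a) a = bil ?X \<Gamma> (m1 f a) (m0 f a)"
    unfolding bil_def
  proof (intro sum.cong refl)
    fix x y assume xy: "x \<in> ?X" "y \<in> ?X"
    show "cnj (m1 f a x) * of_real (\<Gamma> x y) * a y = cnj (m1 f a x) * of_real (\<Gamma> x y) * m0 f a y"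
      using adv xy unfolding adversary_matrix_def m0_def m1_def by (cases "f x"; cases "f y") auto
  qed
  have cj: "bil ?X \<Gamma> (m1 f a) (m0 f a) = cnj (bil ?X \<Gamma> (m0 f a) (m1 f a))"
  proof -
    have "cnj (bil ?X \<Gamma> (m0 f a) (m1 f a)) = (\<Sum>x\<in>?X. \<Sum>y\<in>?X. m0 f a x * of_real (\<Gamma> x y) * cnj (m1 f a y))"
      unfolding bil_def by (simp add: cnj_sum)
    also have "\<dots> = (\<Sum>y\<in>?X. \<Sum>x\<in>?X. m0 f a x * of_real (\<Gamma> x y) * cnj (m1 f a y))"
      by (rule sum.swap)
    also have "\<dots> = bil ?X \<Gamma> (m1 f a) (m0 f a)"
      unfolding bil_def
    proof (intro sum.cong refl)
      fix x y assume xy: "x \<in> ?X" "y \<in> ?X"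
      then have "\<Gamma> x y = \<Gamma> y x" using adv unfolding adversary_matrix_def by blast
      then show "m0 f a y * of_real (\<Gamma> y x) * cnj (m1 f a x) = cnj (m1 f a x) * of_real (\<Gamma> x y) * m0 f a y"
        by simp
    qed
    finally show ?thesis by simp
  qed
  have "cmod ev * nrm2 ?X (m0 f a) = cmod ev * nrm2 ?X (m1 f a)"
  proof -
    have "cmod ev * nrm2 ?X (m0 f a) = cmod (bil ?X \<Gamma> (m0 f a) (m1 f a))"
      using e0 z0 nrm2_nonneg[of ?X "m0 f a"] by (simp add: norm_mult)
    also have "\<dots> = cmod (bil ?X \<Gamma> (m1 f a) (m0 f a))" using cj by simp
    also have "\<dots> = cmod ev * nrm2 ?X (m1 f a)"
      using e1 z1 nrm2_nonneg[of ?X "m1 f a"] by (simp add: norm_mult)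
    finally show ?thesis .
  qed
  then have eq: "nrm2 ?X (m0 f a) = nrm2 ?X (m1 f a)" using ev by simp
  have "nrm2 ?X (m0 f a) + nrm2 ?X (m1 f a) = 1" using m_nrm a1 by simp
  then show "nrm2 ?X (m0 f a) = 1/2" "nrm2 ?X (m1 f a) = 1/2" using eq by simp_all
qed



lemma succ_bound:
  assumes valid: "valid_alg n T U init" and adv: "adversary_matrix n f \<Gamma>"
    and D: "\<forall>x\<in>inputs n. D x = (cmod (a x))\<^sup>2"
    and sp: "spec_norm (inputs n) \<Gamma> > 0"
    and h0: "nrm2 (inputs n) (m0 f a) = 1/2" and h1: "nrm2 (inputs n) (m1 f a) = 1/2"
  shows "p_succ n f D T U init \<le> 1/2 + sqrt (Delta n \<Gamma> U init a T / (2 * spec_norm (inputs n) \<Gamma>))"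
proof -
  let ?X = "inputs n"
  let ?s = "spec_norm ?X \<Gamma>"
  define \<psi> where "\<psi> = (\<lambda>x. alg_state n U init x T)"
  define N0 where "N0 = (\<lambda>p. nrm2 ?X (\<lambda>x. m0 f a x * \<psi> x p))"
  define N1 where "N1 = (\<lambda>p. nrm2 ?X (\<lambda>x. m1 f a x * \<psi> x p))"
  define al where "al = sqrt (\<Sum>i<n. N0 (i, False))"
  define be where "be = sqrt (\<Sum>i<n. N1 (i, False))"
  define ga where "ga = sqrt (\<Sum>i<n. N0 (i, True))"
  define de where "de = sqrt (\<Sum>i<n. N1 (i, True))"
  define g where "g = cmod (GG n \<Gamma> U init a T)"
  have N0n: "N0 p \<ge> 0" for p unfolding N0_def by (rule nrm2_nonneg)
  have N1n: "N1 p \<ge> 0" for p unfolding N1_def by (rule nrm2_nonneg)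
  have s0: "?s \<ge> 0" using sp by simp
  have GT: "GG n \<Gamma> U init a T = (\<Sum>i<n. bil ?X \<Gamma> (\<lambda>x. a x * \<psi> x (i, False)) (\<lambda>x. a x * \<psi> x (i, False))
                                   + bil ?X \<Gamma> (\<lambda>x. a x * \<psi> x (i, True)) (\<lambda>x. a x * \<psi> x (i, True)))"
    unfolding G_form1 sum_alg \<psi>_def ..
  have "g \<le> (\<Sum>i<n. 2 * ?s * (sqrt (N0 (i, False)) * sqrt (N1 (i, False)))
                   + 2 * ?s * (sqrt (N0 (i, True)) * sqrt (N1 (i, True))))"
    unfolding g_def GT N0_def N1_def
    by (rule order_trans[OF norm_sum], rule sum_mono,
        rule order_trans[OF norm_triangle_ineq add_mono[OF bil_abs_split[OF adv] bil_abs_split[OF adv]]])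
  also have "\<dots> = 2 * ?s * ((\<Sum>i<n. sqrt (N0 (i, False)) * sqrt (N1 (i, False)))
                   + (\<Sum>i<n. sqrt (N0 (i, True)) * sqrt (N1 (i, True))))"
    by (simp add: sum.distrib sum_distrib_left algebra_simps)
  also have "\<dots> \<le> 2 * ?s * (al * be + ga * de)"
  proof (intro mult_left_mono add_mono)
    show "(\<Sum>i<n. sqrt (N0 (i, False)) * sqrt (N1 (i, False))) \<le> al * be"
      using cs_real[of "\<lambda>i. sqrt (N0 (i, False))" "\<lambda>i. sqrt (N1 (i, False))" "{..<n}"]
      unfolding al_def be_def by (simp add: N0n N1n)
    show "(\<Sum>i<n. sqrt (N0 (i, True)) * sqrt (N1 (i, True))) \<le> ga * de"
      using cs_real[of "\<lambda>i. sqrt (N0 (i, True))" "\<lambda>i. sqrt (N1 (i, True))" "{..<n}"]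
      unfolding ga_def de_def by (simp add: N0n N1n)
  qed (use s0 in simp)
  finally have gb: "g \<le> 2 * ?s * (al * be + ga * de)" .
  have nst: "nrm2 (alg_idx n) (\<psi> x) = 1" for x unfolding \<psi>_def using norm_state[OF valid] by simp
  have "al\<^sup>2 + ga\<^sup>2 = (\<Sum>p\<in>alg_idx n. N0 p)"
    unfolding al_def ga_def sum_alg by (simp add: N0n sum_nonneg sum.distrib)
  also have "\<dots> = nrm2 ?X (m0 f a)" unfolding N0_def total_mass nst by (simp add: nrm2_def)
  finally have n0: "al\<^sup>2 + ga\<^sup>2 = 1/2" using h0 by simp
  have "be\<^sup>2 + de\<^sup>2 = (\<Sum>p\<in>alg_idx n. N1 p)"
    unfolding be_def de_def sum_alg by (simp add: N1n sum_nonneg sum.distrib)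
  also have "\<dots> = nrm2 ?X (m1 f a)" unfolding N1_def total_mass nst by (simp add: nrm2_def)
  finally have n1: "be\<^sup>2 + de\<^sup>2 = 1/2" using h1 by simp
  have "al\<^sup>2 + de\<^sup>2 = (\<Sum>i<n. N0 (i, False) + N1 (i, True))"
    unfolding al_def de_def by (simp add: N0n N1n sum_nonneg sum.distrib)
  also have "\<dots> = (\<Sum>i<n. \<Sum>x\<in>?X. (cmod (m0 f a x * \<psi> x (i, False)))\<^sup>2 + (cmod (m1 f a x * \<psi> x (i, True)))\<^sup>2)"
    unfolding N0_def N1_def nrm2_def by (simp add: sum.distrib)
  also have "\<dots> = (\<Sum>x\<in>?X. \<Sum>i<n. (cmod (m0 f a x * \<psi> x (i, False)))\<^sup>2 + (cmod (m1 f a x * \<psi> x (i, True)))\<^sup>2)"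
    by (rule sum.swap)
  also have "\<dots> = p_succ n f D T U init"
    unfolding p_succ_def
  proof (rule sum.cong[OF refl])
    fix x assume x: "x \<in> ?X"
    show "(\<Sum>i<n. (cmod (m0 f a x * \<psi> x (i, False)))\<^sup>2 + (cmod (m1 f a x * \<psi> x (i, True)))\<^sup>2)
        = D x * (\<Sum>i<n. (cmod (alg_state n U init x T (i, f x)))\<^sup>2)"
      using D x by (cases "f x") (simp_all add: m0_def m1_def \<psi>_def norm_mult power_mult_distrib sum_distrib_left)
  qed
  finally have p: "p_succ n f D T U init = al\<^sup>2 + de\<^sup>2" by simp
  have "Delta n \<Gamma> U init a T = ?s - g" unfolding Delta_def g_def ..
  then show ?thesis
    using final_alg[of al be ga de ?s g, OF _ _ _ _ sp gb n0 n1 p]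
    unfolding al_def be_def ga_def de_def by (simp add: sum_nonneg N0n N1n)
qed



theorem theorem5p2:
  fixes n :: nat and f :: "bool list \<Rightarrow> bool" and D :: "bool list \<Rightarrow> real"
    and a :: "bool list \<Rightarrow> complex" and \<Gamma> :: "bool list \<Rightarrow> bool list \<Rightarrow> real"
  assumes a_unit: "(\<Sum>x\<in>inputs n. (cmod (a x))\<^sup>2) = 1"
    and D_def: "\<forall>x\<in>inputs n. D x = (cmod (a x))\<^sup>2"
    and adv: "adversary_matrix n f \<Gamma>"
    and nonzero: "\<exists>x\<in>inputs n. \<exists>y\<in>inputs n. \<Gamma> x y \<noteq> 0"
    and eig: "principal_eigvec n \<Gamma> a"
  shows "(\<forall>T U init. valid_alg n T U init \<longrightarrow>
            Delta n \<Gamma> U init a 0 = 0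
          \<and> (\<forall>t<T. Delta n \<Gamma> U init a (Suc t)
                    \<le> Delta n \<Gamma> U init a t
                       + 2 * Max ((\<lambda>i. spec_norm (inputs n) (adv_part \<Gamma> i)) ` {0..<n}))
          \<and> p_succ n f D T U init
              \<le> 1/2 + sqrt (Delta n \<Gamma> U init a T / (2 * spec_norm (inputs n) \<Gamma>)))
       \<and> (\<forall>T. query_complexity n f D = enat T \<longrightarrow>
            spec_norm (inputs n) \<Gamma>
              / (36 * Max ((\<lambda>i. spec_norm (inputs n) (adv_part \<Gamma> i)) ` {0..<n})) \<le> real T)"
proof -
  let ?X = "inputs n"
  let ?s = "spec_norm ?X \<Gamma>"
  let ?M = "Max ((\<lambda>i. spec_norm (inputs n) (adv_part \<Gamma> i)) ` {0..<n})"
  obtain ev where ev: "cmod ev = ?s" and eq: "\<forall>x\<in>?X. (\<Sum>y\<in>?X. of_real (\<Gamma> x y) * a y) = ev * a x"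
    using eig unfolding principal_eigvec_def by blast
  have a1: "nrm2 ?X a = 1" using a_unit by (simp add: nrm2_def)
  obtain x y where xy: "x \<in> ?X" "y \<in> ?X" "\<Gamma> x y \<noteq> 0" using nonzero by blast
  have sp: "?s > 0" using spec_pos[of x n y \<Gamma>] xy by blast
  have "f x \<noteq> f y" using adv xy unfolding adversary_matrix_def by blast
  then have "x \<noteq> y" by blast
  have n0: "0 < n"
  proof (rule ccontr)
    assume "\<not> 0 < n"
    then have "n = 0" by simp
    then show False using xy \<open>x \<noteq> y\<close> by (simp add: inputs_def)
  qed
  have h0: "nrm2 ?X (m0 f a) = 1/2" and h1: "nrm2 ?X (m1 f a) = 1/2"
    using half[OF adv eq _ a1] ev sp by simp_all
  have D0: "Delta n \<Gamma> U init a 0 = 0" if "valid_alg n T U init" for T U init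
    unfolding Delta_def using G0[OF that eq a1] ev by simp
  have DS: "Delta n \<Gamma> U init a (Suc t) \<le> Delta n \<Gamma> U init a t + 2 * ?M"
    if "valid_alg n T U init" "t < T" for T U init t
    using Delta_step[OF that(1) _ a1 n0] that(2) by simp
  have SB: "p_succ n f D T U init \<le> 1/2 + sqrt (Delta n \<Gamma> U init a T / (2 * ?s))"
    if "valid_alg n T U init" for T U init
    using succ_bound[OF that adv D_def sp h0 h1] .
  have part2: "?s / (36 * ?M) \<le> real T" if q: "query_complexity n f D = enat T" for T
  proof -
    define A where "A = {enat T | T. \<exists>U init. valid_alg n T U init \<and> p_succ n f D T U init \<ge> 2/3}"
    have "Inf A = enat T" using q unfolding query_complexity_def A_def .
    moreover have "A \<noteq> {}"
    proof
      assume "A = {}"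
      then have "Inf A = \<infinity>" by (simp add: Inf_enat_def)
      with \<open>Inf A = enat T\<close> show False by simp
    qed
    ultimately have "enat T \<in> A" unfolding Inf_enat_def by (metis LeastI_ex ex_in_conv)
    then obtain U init where valid: "valid_alg n T U init" and ps: "p_succ n f D T U init \<ge> 2/3"
      unfolding A_def by auto
    have "spec_norm ?X (adv_part \<Gamma> 0) \<le> ?M" by (rule Max_ge) (use n0 in auto)
    moreover have "0 \<le> spec_norm ?X (adv_part \<Gamma> 0)"
      using spec_nonneg[OF finite_inputs inputs_ne, where M = "adv_part \<Gamma> 0"] .
    ultimately have M0: "0 \<le> ?M" by linarith
    have DT: "Delta n \<Gamma> U init a t \<le> 2 * ?M * real t" if "t \<le> T" for t
      using that
    proof (induction t)
      case 0 then show ?case using D0[OF valid] by simp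
    next
      case (Suc t)
      then have "Delta n \<Gamma> U init a (Suc t) \<le> Delta n \<Gamma> U init a t + 2 * ?M"
        using DS[OF valid] by simp
      then show ?case using Suc by (simp add: algebra_simps)
    qed
    have h23: "2/3 \<le> 1/2 + sqrt (Delta n \<Gamma> U init a T / (2 * ?s))" using ps SB[OF valid] by simp
    define z where "z = Delta n \<Gamma> U init a T / (2 * ?s)"
    have "1/6 \<le> sqrt z" unfolding z_def using h23 by linarith
    have e: "sqrt (1/36) = (1/6::real)" by (simp add: real_sqrt_divide)
    have "sqrt (1/36) \<le> sqrt z" unfolding e by fact
    then have "1/36 \<le> z" by (rule real_sqrt_le_iff[THEN iffD1])
    then have "?s / 18 \<le> Delta n \<Gamma> U init a T" using sp unfolding z_def by (simp add: field_simps)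
    also have "\<dots> \<le> 2 * ?M * real T" using DT by simp
    finally have key: "?s \<le> 36 * ?M * real T" by simp
    show ?thesis
    proof (cases "?M = 0")
      case True then show ?thesis by simp
    next
      case False
      then have "0 < 36 * ?M" using M0 by simp
      then show ?thesis using key by (simp add: divide_le_eq mult.commute)
    qed
  qed
  show ?thesis using D0 DS SB part2 by blast
qed

end
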